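(* In the pBeeGees protocol (setting described in the context), if a correct process $p$ enters view $v$, then for every view $v'<v$ some correct process has entered view $v'$.
   Context: Setting (pBeeGees view synchronization). $n=3f+1$ processes, at most $f$ Byzantine, the rest correct; partial synchrony with bound $\Delta$ after GST. Views $v=1,2,\dots$ with leaders $l_v$. A process enters view $v+1$ only upon obtaining either a quorum certificate (QC: $n-f$ votes from distinct processes for the block of view $v$) or a timeout certificate (TC: $n-f$ timeout messages for view $v$ from distinct processes). A correct process in view $v$ that has not advanced after waiting time $F(v)$ times out and broadcasts a timeout message for view $v$; a correct process that receives $f+1$ timeout messages for view $v$ also broadcasts its own timeout message for view $v$. *)

theory Defs
  imports Main
begin

text \<open>Time is discrete (nat).
  enters p v t : process p enters view v at time t.
  vote p v t   : process p sends a vote for the block of view v at time t.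
  tmo p v t    : process p sends a timeout message for view v at time t.
  A message sent at time t' can be received/used at any time t > t'.\<close>

definition correct :: "'p set \<Rightarrow> 'p set \<Rightarrow> 'p \<Rightarrow> bool" where
  "correct P Byz p \<longleftrightarrow> p \<in> P \<and> p \<notin> Byz"

definition has_QC :: "'p set \<Rightarrow> nat \<Rightarrow> ('p \<Rightarrow> nat \<Rightarrow> nat \<Rightarrow> bool) \<Rightarrow> nat \<Rightarrow> nat \<Rightarrow> bool" where
  "has_QC P f vote v t \<longleftrightarrow> 2 * f + 1 \<le> card {q \<in> P. \<exists>t'<t. vote q v t'}"

definition has_TC :: "'p set \<Rightarrow> nat \<Rightarrow> ('p \<Rightarrow> nat \<Rightarrow> nat \<Rightarrow> bool) \<Rightarrow> nat \<Rightarrow> nat \<Rightarrow> bool" where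
  "has_TC P f tmo v t \<longleftrightarrow> 2 * f + 1 \<le> card {q \<in> P. \<exists>t'<t. tmo q v t'}"

definition pbeegees_exec ::
  "'p set \<Rightarrow> 'p set \<Rightarrow> nat \<Rightarrow> (nat \<Rightarrow> nat) \<Rightarrow>
   ('p \<Rightarrow> nat \<Rightarrow> nat \<Rightarrow> bool) \<Rightarrow> ('p \<Rightarrow> nat \<Rightarrow> nat \<Rightarrow> bool) \<Rightarrow> ('p \<Rightarrow> nat \<Rightarrow> nat \<Rightarrow> bool) \<Rightarrow> bool"
where
  "pbeegees_exec P Byz f Fw enters vote tmo \<longleftrightarrow>
     finite P \<and> card P = 3 * f + 1 \<and> Byz \<subseteq> P \<and> card Byz \<le> f \<and>
     \<comment> \<open>views are numbered 1,2,...\<close>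
     (\<forall>p v t. correct P Byz p \<and> enters p v t \<longrightarrow> 1 \<le> v) \<and>
     \<comment> \<open>a correct process enters view v+1 only with a QC or TC for view v\<close>
     (\<forall>p v t. correct P Byz p \<and> enters p (Suc v) t \<and> 1 \<le> v \<longrightarrow>
        has_QC P f vote v t \<or> has_TC P f tmo v t) \<and>
     \<comment> \<open>a correct process votes for the block of view v only while in view v\<close>
     (\<forall>p v t. correct P Byz p \<and> vote p v t \<longrightarrow>
        (\<exists>t0\<le>t. enters p v t0) \<and> (\<forall>w>v. \<forall>t1\<le>t. \<not> enters p w t1)) \<and>
     \<comment> \<open>a correct process sends a timeout for view v only after waiting F(v) in
         view v without advancing, or after receiving f+1 timeouts for view v\<close>
     (\<forall>p v t. correct P Byz p \<and> tmo p v t \<longrightarrow>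
        (\<exists>t0. enters p v t0 \<and> t0 + Fw v \<le> t \<and> (\<forall>w>v. \<forall>t1\<le>t. \<not> enters p w t1))
        \<or> f + 1 \<le> card {q \<in> P. \<exists>t'<t. tmo q v t'})"

end

theory Submission
  imports Defs
begin

lemma count_correct:
  assumes "finite P" "Byz \<subseteq> P" "card Byz \<le> f" "f + 1 \<le> card {q \<in> P. Q q}"
  shows "\<exists>q. correct P Byz q \<and> Q q"
proof (rule ccontr)
  assume "\<not> ?thesis"
  then have "{q \<in> P. Q q} \<subseteq> Byz" by (auto simp: correct_def)
  then have "card {q \<in> P. Q q} \<le> card Byz"
    using assms by (meson card_mono finite_subset)
  then show False using assms by simp
qed

lemma ex_fin:
  assumes "pbeegees_exec P Byz f Fw enters vote tmo"
  shows "finite P" "Byz \<subseteq> P" "card Byz \<le> f"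
  using assms unfolding pbeegees_exec_def by simp_all

lemma ex_tmo:
  assumes "pbeegees_exec P Byz f Fw enters vote tmo" "correct P Byz p" "tmo p v t"
  shows "(\<exists>t0. enters p v t0 \<and> t0 + Fw v \<le> t \<and> (\<forall>w>v. \<forall>t1\<le>t. \<not> enters p w t1))
        \<or> f + 1 \<le> card {q \<in> P. \<exists>t'<t. tmo q v t'}"
proof -
  have "\<forall>p v t. correct P Byz p \<and> tmo p v t \<longrightarrow>
        (\<exists>t0. enters p v t0 \<and> t0 + Fw v \<le> t \<and> (\<forall>w>v. \<forall>t1\<le>t. \<not> enters p w t1))
        \<or> f + 1 \<le> card {q \<in> P. \<exists>t'<t. tmo q v t'}"
    using assms(1) unfolding pbeegees_exec_def by (elim conjE)
  then show ?thesis using assms(2,3) by blast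
qed

lemma ex_vote:
  assumes "pbeegees_exec P Byz f Fw enters vote tmo" "correct P Byz p" "vote p v t"
  shows "\<exists>t0\<le>t. enters p v t0"
proof -
  have "\<forall>p v t. correct P Byz p \<and> vote p v t \<longrightarrow>
        (\<exists>t0\<le>t. enters p v t0) \<and> (\<forall>w>v. \<forall>t1\<le>t. \<not> enters p w t1)"
    using assms(1) unfolding pbeegees_exec_def by (elim conjE)
  then show ?thesis using assms(2,3) by blast
qed

lemma ex_enter:
  assumes "pbeegees_exec P Byz f Fw enters vote tmo" "correct P Byz p" "enters p (Suc v) t" "1 \<le> v"
  shows "has_QC P f vote v t \<or> has_TC P f tmo v t"
proof -
  have "\<forall>p v t. correct P Byz p \<and> enters p (Suc v) t \<and> 1 \<le> v \<longrightarrow>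
        has_QC P f vote v t \<or> has_TC P f tmo v t"
    using assms(1) unfolding pbeegees_exec_def by (elim conjE)
  then show ?thesis using assms(2,3,4) by blast
qed

lemma tmo_entered:
  assumes ex: "pbeegees_exec P Byz f Fw enters vote tmo"
  shows "correct P Byz q \<Longrightarrow> tmo q w t \<Longrightarrow> \<exists>r t'. correct P Byz r \<and> enters r w t'"
proof (induction t arbitrary: q rule: less_induct)
  case (less t)
  have fin: "finite P" "Byz \<subseteq> P" "card Byz \<le> f" using ex_fin[OF ex] by auto
  from ex_tmo[OF ex less.prems] have
    "(\<exists>t0. enters q w t0 \<and> t0 + Fw w \<le> t \<and> (\<forall>u>w. \<forall>t1\<le>t. \<not> enters q u t1))
        \<or> f + 1 \<le> card {r \<in> P. \<exists>t'<t. tmo r w t'}"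
    .
  then show ?case
  proof
    assume "\<exists>t0. enters q w t0 \<and> t0 + Fw w \<le> t \<and> (\<forall>u>w. \<forall>t1\<le>t. \<not> enters q u t1)"
    then show ?thesis using less.prems by blast
  next
    assume "f + 1 \<le> card {r \<in> P. \<exists>t'<t. tmo r w t'}"
    from count_correct[OF fin this] obtain r t' where "correct P Byz r" "t' < t" "tmo r w t'"
      by blast
    then show ?thesis using less.IH by blast
  qed
qed

lemma step:
  assumes ex: "pbeegees_exec P Byz f Fw enters vote tmo"
    and "correct P Byz p" "enters p (Suc w) t" "1 \<le> w"
  shows "\<exists>r t'. correct P Byz r \<and> enters r w t'"
proof -
  have fin: "finite P" "Byz \<subseteq> P" "card Byz \<le> f" using ex_fin[OF ex] by auto
  have fin2: "card Byz \<le> 2 * f" using fin by simp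
  from ex_enter[OF ex assms(2-4)] have "has_QC P f vote w t \<or> has_TC P f tmo w t" .
  then show ?thesis
  proof
    assume "has_QC P f vote w t"
    then have "f + 1 \<le> card {q \<in> P. \<exists>t'<t. vote q w t'}" by (simp add: has_QC_def)
    from count_correct[OF fin this] obtain r t' where "correct P Byz r" "vote r w t'" by blast
    then show ?thesis using ex_vote[OF ex] by blast
  next
    assume "has_TC P f tmo w t"
    then have "f + 1 \<le> card {q \<in> P. \<exists>t'<t. tmo q w t'}" by (simp add: has_TC_def)
    from count_correct[OF fin this] obtain r t' where "correct P Byz r" "tmo r w t'" by blast
    then show ?thesis using tmo_entered[OF ex] by blast
  qed
qed

theorem lemma6:
  assumes "pbeegees_exec P Byz f Fw enters vote tmo"
    and "correct P Byz p" and "enters p v t"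
    and "1 \<le> v'" and "v' < v"
  shows "\<exists>q t'. correct P Byz q \<and> enters q v' t'"
proof -
  have "\<And>k. (\<exists>q t'. correct P Byz q \<and> enters q (v' + k) t') \<Longrightarrow> \<exists>q t'. correct P Byz q \<and> enters q v' t'"
  proof -
    fix k show "(\<exists>q t'. correct P Byz q \<and> enters q (v' + k) t') \<Longrightarrow> \<exists>q t'. correct P Byz q \<and> enters q v' t'"
    proof (induction k)
      case 0 then show ?case by simp
    next
      case (Suc k)
      then obtain q t' where "correct P Byz q" "enters q (Suc (v' + k)) t'" by auto
      then have "\<exists>r t'. correct P Byz r \<and> enters r (v' + k) t'"
        using step[OF assms(1)] assms(4) by simp
      then show ?case using Suc.IH by blast
    qed
  qed
  moreover have "v = v' + (v - v')" using assms(5) by simp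
  ultimately show ?thesis using assms(2,3) by metis
qed

end
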